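(* Fix $c \in \mathbb{R}$. For any $\vartheta \in \mathbb{R}$ and any $\alpha \in (0, 0.5)$ there exists $\delta > 0$ such that whenever $c < x^{\text{obs}} < c + \delta$, we have $\vartheta \notin [\theta(1-\alpha/2), \theta(\alpha/2)]$, where $\theta(\cdot)$ is computed at this $x^{\text{obs}}$.
   Context: Let $\Phi$ denote the standard normal distribution function. For $c \in \mathbb{R}$, $a \ge c$ and $\theta \in \mathbb{R}$ define $$F(a;\theta,c) = \frac{\Phi(a-\theta) - \Phi(c-\theta)}{1-\Phi(c-\theta)}.$$ It is known that for each fixed $x^{\text{obs}} > c$ the map $\theta \mapsto F(x^{\text{obs}};\theta,c)$ is continuous and strictly decreasing from $\mathbb{R}$ onto $(0,1)$. For $p \in (0,1)$ and $x^{\text{obs}} > c$, $\theta(p) = \theta(p; x^{\text{obs}}, c)$ denotes the unique $\theta$ with $F(x^{\text{obs}};\theta,c) = p$; it is strictly decreasing in $p$. The interval $[\theta(1-\alpha/2), \theta(\alpha/2)]$ is the $100(1-\alpha)\%$ conditional confidence interval. *)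

theory Defs
  imports "HOL-Probability.Probability"
begin

definition Phi :: "real \<Rightarrow> real" where
  "Phi = cdf (density lborel std_normal_density)"

definition Ftrunc :: "real \<Rightarrow> real \<Rightarrow> real \<Rightarrow> real" where
  "Ftrunc a \<theta> c = (Phi (a - \<theta>) - Phi (c - \<theta>)) / (1 - Phi (c - \<theta>))"

definition theta_p :: "real \<Rightarrow> real \<Rightarrow> real \<Rightarrow> real" where
  "theta_p p xobs c = (THE \<theta>. Ftrunc xobs \<theta> c = p)"

end

theory Submission imports Defs "HOL-Real_Asymp.Real_Asymp" begin

lemma RD: "real_distribution (density lborel std_normal_density)"
  unfolding real_distribution_def real_distribution_axioms_def
  by (simp add: prob_space_normal_density)

lemma Phi_diff:
  assumes "a < x"
  shows "Phi x - Phi a = (LBINT t=a..x. std_normal_density t)"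
proof -
  let ?M = "density lborel std_normal_density"
  have "Phi x - Phi a = measure ?M {a<..x}"
    unfolding Phi_def using finite_borel_measure.cdf_diff_eq[OF real_distribution.finite_borel_measure_M[OF RD] assms] .
  also have "\<dots> = integral\<^sup>L ?M (indicator {a<..x})"
    by simp
  also have "\<dots> = integral\<^sup>L lborel (\<lambda>t. std_normal_density t *\<^sub>R indicator {a<..x} t)"
    by (rule integral_density) auto
  also have "\<dots> = (LBINT t:{a<..x}. std_normal_density t)"
    unfolding set_lebesgue_integral_def by (simp add: mult.commute)
  also have "\<dots> = (LBINT t=a..x. std_normal_density t)"
    using assms by (simp add: interval_integral_Ioc)
  finally show ?thesis .
qed

lemma Phi_deriv: "(Phi has_real_derivative std_normal_density x) (at x)"
proof -
  let ?G = "\<lambda>u. Phi (x-1) + (LBINT t=(x-1)..u. std_normal_density t)"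
  have cont: "continuous_on {x-1..x+1} std_normal_density"
    unfolding std_normal_density_def by (intro continuous_intros) auto
  have "(?G has_vector_derivative std_normal_density x) (at x within {x-1..x+1})"
    using interval_integral_FTC2[of "x-1" "x-1" "x+1" std_normal_density x, OF _ _ cont]
    by (auto intro!: derivative_eq_intros)
  then have "(?G has_real_derivative std_normal_density x) (at x)"
    by (simp add: has_real_derivative_iff_has_vector_derivative at_within_Icc_at)
  then show ?thesis
  proof (rule has_field_derivative_transform_within_open[where S="{x-1<..}"])
    show "\<And>u. u \<in> {x-1<..} \<Longrightarrow> ?G u = Phi u" using Phi_diff by force
  qed auto
qed

abbreviation "phi \<equiv> std_normal_density"

lemma phi_deriv: "(phi has_real_derivative (- u * phi u)) (at u)"
proof -
  have "((\<lambda>u. exp(-u\<^sup>2/2)) has_real_derivative exp(-u\<^sup>2/2) * (-u)) (at u)"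
    by (auto intro!: derivative_eq_intros)
  from DERIV_cmult[OF this, of "1 / sqrt (2 * pi)"] show ?thesis
    unfolding std_normal_density_def[abs_def] by (simp add: mult_ac)
qed

lemma phi_pos: "0 < phi u" by (simp add: normal_density_pos)

lemma Phi_cont: "isCont Phi x"
  using Phi_deriv DERIV_isCont by blast

lemma Phi_cont_comp[continuous_intros]: "isCont g x \<Longrightarrow> isCont (\<lambda>x. Phi (g x)) x"
  by (rule isCont_o2[OF _ Phi_cont])

lemma Phi_le1: "Phi u \<le> 1"
  unfolding Phi_def using real_distribution.cdf_bounded_prob[OF RD] .

lemma Phi_top: "(Phi \<longlongrightarrow> 1) at_top"
  unfolding Phi_def using real_distribution.cdf_lim_at_top_prob[OF RD] .

lemma Phi_less: "a < b \<Longrightarrow> Phi a < Phi b"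
  by (rule DERIV_pos_imp_increasing[of a b Phi]) (use Phi_deriv phi_pos in blast)+

lemma Q_pos: "0 < 1 - Phi u"
  using Phi_less[of u "u+1"] Phi_le1[of "u+1"] by simp

lemma Mills: assumes "0 < u" shows "u * (1 - Phi u) < phi u"
proof -
  define m where "m v = phi v / v - (1 - Phi v)" for v
  have md: "(m has_real_derivative (- phi v / v^2)) (at v)" if "0 < v" for v
    unfolding m_def using that
    by (auto intro!: derivative_eq_intros phi_deriv Phi_deriv simp: field_simps power2_eq_square)
  have dec: "m b < m a" if "0 < a" "a < b" for a b
    apply (rule DERIV_neg_imp_decreasing[OF that(2)])
    subgoal for x using md[of x] phi_pos[of x] that
      by (intro exI[of _ "- phi x / x^2"]) auto
    done
  have lim: "(m \<longlongrightarrow> 0) at_top"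
  proof -
    have "((\<lambda>v. phi v / v) \<longlongrightarrow> 0) at_top"
      unfolding std_normal_density_def by real_asymp
    moreover have "((\<lambda>v. 1 - Phi v) \<longlongrightarrow> 1 - 1) at_top"
      by (intro tendsto_intros Phi_top)
    ultimately show ?thesis unfolding m_def using tendsto_diff by fastforce
  qed
  have "0 \<le> m (u+1)"
  proof (rule tendsto_le[OF _ tendsto_const lim])
    show "\<forall>\<^sub>F x in at_top. m x \<le> m (u + 1)"
      by (rule eventually_mono[OF eventually_ge_at_top[of "u+2"]])
         (use dec[of "u+1"] assms in \<open>auto intro: less_imp_le\<close>)
  qed simp
  with dec[of u "u+1"] assms have "0 < m u" by simp
  then show ?thesis using assms unfolding m_def by (simp add: field_simps)
qed

lemma Mills_all: "u * (1 - Phi u) < phi u"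
proof (cases "0 < u")
  case True then show ?thesis using Mills by blast
next
  case False
  then have "u * (1 - Phi u) \<le> 0" using Q_pos[of u] by (simp add: mult_nonpos_nonneg)
  then show ?thesis using phi_pos[of u] by linarith
qed

lemma Phi_deriv_comp[derivative_intros]:
  "(g has_real_derivative g') (at x within s) \<Longrightarrow>
   ((\<lambda>x. Phi (g x)) has_real_derivative phi (g x) * g') (at x within s)"
  by (rule DERIV_chain2[OF Phi_deriv])

lemma h_gt: "u < phi u / (1 - Phi u)"
  using Mills_all[of u] Q_pos[of u] by (simp add: field_simps)

lemma h_mono: assumes "a < b" shows "phi a / (1 - Phi a) < phi b / (1 - Phi b)"
proof (rule DERIV_pos_imp_increasing[OF assms])
  fix v
  let ?d = "((- v * phi v) * (1 - Phi v) - phi v * (- phi v)) / (1 - Phi v)^2"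
  have "((\<lambda>v. phi v / (1 - Phi v)) has_real_derivative ?d) (at v)"
    using Q_pos[of v]
    by (auto intro!: derivative_eq_intros phi_deriv Phi_deriv simp: power2_eq_square)
  moreover have "0 < ?d"
  proof -
    have "0 < phi v * (phi v - v * (1 - Phi v))"
      using phi_pos[of v] Mills_all[of v] by simp
    then show ?thesis using Q_pos[of v] by (simp add: algebra_simps)
  qed
  ultimately show "\<exists>y. ((\<lambda>v. phi v / (1 - Phi v)) has_real_derivative y) (at v) \<and> 0 < y" by blast
qed

lemma R_mono: assumes "0 < d" "a < b"
  shows "(1 - Phi (b+d)) / (1 - Phi b) < (1 - Phi (a+d)) / (1 - Phi a)"
proof (rule DERIV_neg_imp_decreasing[OF assms(2)])
  fix v
  let ?d = "((- phi (v+d)) * (1 - Phi v) - (1 - Phi (v+d)) * (- phi v)) / (1 - Phi v)^2"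
  have "((\<lambda>v. (1 - Phi (v+d)) / (1 - Phi v)) has_real_derivative ?d) (at v)"
    using Q_pos[of v]
    by (auto intro!: derivative_eq_intros Phi_deriv simp: power2_eq_square)
  moreover have "?d < 0"
  proof -
    have "phi v / (1 - Phi v) < phi (v+d) / (1 - Phi (v+d))" using h_mono assms by simp
    then have "(1 - Phi (v+d)) * phi v < phi (v+d) * (1 - Phi v)"
      using Q_pos[of v] Q_pos[of "v+d"] by (simp add: field_simps)
    then show ?thesis using Q_pos[of v] by (simp add: divide_neg_pos algebra_simps)
  qed
  ultimately show "\<exists>y. ((\<lambda>v. (1 - Phi (v+d)) / (1 - Phi v)) has_real_derivative y) (at v) \<and> y < 0" by blast
qed

lemma R_bound: assumes "0 < d" "0 \<le> u"
  shows "(1 - Phi (u+d)) / (1 - Phi u) < exp (- d * u)"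
proof -
  have "\<And>x. u \<le> x \<Longrightarrow> x \<le> u + d \<Longrightarrow>
     ((\<lambda>v. ln (1 - Phi v)) has_real_derivative (- phi x / (1 - Phi x))) (at x)"
    using Q_pos by (auto intro!: derivative_eq_intros Phi_deriv)
  from MVT2[of u "u+d", OF _ this] assms obtain z where z: "u < z" "z < u + d"
    "ln (1 - Phi (u+d)) - ln (1 - Phi u) = (u + d - u) * (- phi z / (1 - Phi z))" by auto
  have "z < phi z / (1 - Phi z)" by (rule h_gt)
  with z assms have "d * u < d * (phi z / (1 - Phi z))"
    by (intro mult_strict_left_mono) auto
  with z have "ln (1 - Phi (u+d)) - ln (1 - Phi u) < - d * u" by simp
  then have "exp (ln (1 - Phi (u+d)) - ln (1 - Phi u)) < exp (- d * u)" by simp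
  then show ?thesis using Q_pos[of u] Q_pos[of "u+d"] by (simp add: exp_diff)
qed

lemma F_eq: "Ftrunc x t c = 1 - (1 - Phi ((c - t) + (x - c))) / (1 - Phi (c - t))"
  unfolding Ftrunc_def using Q_pos[of "c - t"] by (simp add: field_simps)

lemma F_strict: assumes "c < x" "t1 < t2" shows "Ftrunc x t2 c < Ftrunc x t1 c"
  using R_mono[of "x - c" "c - t2" "c - t1"] assms unfolding F_eq by simp

lemma F_cont: "isCont (\<lambda>t. Ftrunc x t c) t"
  unfolding Ftrunc_def using Q_pos[of "c - t"] by (intro continuous_intros) auto

lemma F_big: assumes "c < x" shows "1/2 < Ftrunc x (c - 1 / (x - c)) c"
proof -
  have "(1 - Phi (1 / (x - c) + (x - c))) / (1 - Phi (1 / (x - c))) < exp (- (x - c) * (1 / (x - c)))"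
    using R_bound[of "x - c" "1 / (x - c)"] assms by simp
  also have "\<dots> = exp (-1)" using assms by (simp add: divide_simps)
  also have "\<dots> \<le> 1/2"
  proof -
    have "2 \<le> exp (1::real)" using exp_ge_add_one_self[of 1] by simp
    then show ?thesis by (simp add: exp_minus field_simps)
  qed
  finally show ?thesis unfolding F_eq by simp
qed

theorem mainTheorem2:
  fixes c \<theta>0 \<alpha> :: real
  assumes "0 < \<alpha>" and "\<alpha> < 1/2"
  shows "\<exists>\<delta>>0. \<forall>xobs. c < xobs \<and> xobs < c + \<delta> \<longrightarrow>
           \<theta>0 \<notin> {theta_p (1 - \<alpha>/2) xobs c .. theta_p (\<alpha>/2) xobs c}"
proof -
  have "isCont (\<lambda>x. Ftrunc x \<theta>0 c) c"
    unfolding Ftrunc_def using Q_pos[of "c - \<theta>0"] by (intro continuous_intros) auto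
  moreover have "Ftrunc c \<theta>0 c = 0" unfolding Ftrunc_def by simp
  ultimately have "(\<lambda>x. Ftrunc x \<theta>0 c) \<midarrow>c\<rightarrow> 0" unfolding isCont_def by simp
  from LIM_D[OF this, of "\<alpha>/2"] assms obtain \<delta> where \<delta>: "\<delta> > 0"
    "\<And>x. x \<noteq> c \<and> norm (x - c) < \<delta> \<Longrightarrow> norm (Ftrunc x \<theta>0 c - 0) < \<alpha>/2" by auto
  show ?thesis
  proof (intro exI[of _ \<delta>] conjI allI impI)
    show "0 < \<delta>" by fact
    fix x assume x: "c < x \<and> x < c + \<delta>"
    let ?f = "\<lambda>t. Ftrunc x t c"
    have f0: "?f \<theta>0 < \<alpha>/2" using \<delta>(2)[of x] x by auto
    define t1 where "t1 = c - 1 / (x - c)"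
    have f1: "\<alpha>/2 < ?f t1" using F_big[of c x] x assms unfolding t1_def by simp
    have "t1 < \<theta>0"
    proof (rule ccontr)
      assume "\<not> t1 < \<theta>0"
      then have "?f t1 \<le> ?f \<theta>0" using F_strict[of c x \<theta>0 t1] x
        by (cases "t1 = \<theta>0") auto
      with f0 f1 show False by simp
    qed
    from IVT2[of ?f \<theta>0 "\<alpha>/2" t1] f0 f1 \<open>t1 < \<theta>0\<close> F_cont
    obtain t where t: "t1 \<le> t" "t \<le> \<theta>0" "?f t = \<alpha>/2" by auto
    have uniq: "s = t" if "?f s = \<alpha>/2" for s
    proof (rule ccontr)
      assume "s \<noteq> t"
      then consider "s < t" | "t < s" by linarith
      then show False using F_strict[of c x s t] F_strict[of c x t s] x that t(3) by cases auto
    qed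
    have "theta_p (\<alpha>/2) x c = t"
      unfolding theta_p_def using t(3) uniq by (rule the_equality)
    moreover have "t < \<theta>0" using t f0 by (cases "t = \<theta>0") auto
    ultimately show "\<theta>0 \<notin> {theta_p (1 - \<alpha>/2) x c .. theta_p (\<alpha>/2) x c}" by auto
  qed
qed

end
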